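(* For every $\xi\in\mathbb{Z}^d$ with $\|\xi\|_1=1$, $$\lim_{r\searrow0}\mathbf P_r\bigl(\sigma_r(\xi)\le r^{-d/2}\psi_d(r)^{-1/2}\bigr)=0.$$
   Context: Frog model setting: $d\ge2$, $r\in(0,1]$, $\omega$ i.i.d. Bernoulli($r$) on $\mathbb{Z}^d$, independent simple random walks $(S^x_k)_{k\ge0}$ with $S^x_0=x$, independent of $\omega$; joint law $\mathbf P_r$; $\mathcal O:=\{x:\omega(x)=1\}$; $\mathcal R^A_n:=\bigcup_{x\in A}\{S^x_k:0\le k\le n\}$. $\phi_d(t):=t/\log t$ if $d=2$, $\phi_d(t):=t$ if $d\ge3$; $\delta_d(r):=\sqrt{|\log r|/r}$ if $d=2$, $1/\sqrt r$ if $d\ge3$. Let $\delta:=(50d)^{-d/2}$ and let $C\in(0,1)$ be a constant (depending only on $d$) such that for every $r\in(0,1]$, every integer $n\ge2$ and all finite $A,B\subset\mathbb{Z}^d$ with $\max\{\|x-y\|_2:x\in A,y\in B\}\le\sqrt n$ and $\#B\ge\delta n^{d/2}$, one has $\mathbf P_r(\#(\mathcal R^A_n\cap B\cap\mathcal O)<\frac r2\min\{C\phi_d(n)\#A,(1-\delta)\#B\})\le e^{-C\#A}+\exp\{-\frac r8\min\{C\phi_d(n)\#A,(1-\delta)\#B\}\}$ (such $C$ exists). Define $\psi_d(r):=2dC^{-1}\delta_d(r)^2$, $\nu_d(r):=100d\lceil\psi_d(r)\rceil$, and for $i\in\mathbb{N}_0$, $Q_{r,i}(\xi):=\{y\in\mathbb{Z}^d:\|y-3\lceil\psi_d(r)^{1/2}\rceil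 i\xi\|_\infty\le\lceil\psi_d(r)^{1/2}\rceil\}$. Set $\Gamma_{r,0}(\xi):=Q_{r,0}(\xi)\cap\mathcal O$ and $\Gamma_{r,i}(\xi):=\mathcal R^{\Gamma_{r,i-1}(\xi)}_{\nu_d(r)}\cap Q_{r,i}(\xi)\cap\mathcal O$ for $i\ge1$, and $\sigma_r(\xi):=\inf\{i\in\mathbb{N}_0:\#\Gamma_{r,i}(\xi)<2dC^{-1}|\log r|\}$. *)

theory Defs
  imports "HOL-Probability.Probability"
begin

text \<open>Frog model on the lattice Z^d, with d = CARD('d).
A sample point is a pair: the occupation configuration omega (True = occupied)
and, for every site x and time j, the j-th step of the walk started at x,
encoded as a pair (coordinate, sign).\<close>

type_synonym 'd frog_space = "((int^'d) \<Rightarrow> bool) \<times> ((int^'d) \<times> nat \<Rightarrow> 'd \<times> bool)"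

definition frogP :: "real \<Rightarrow> ('d::finite) frog_space measure" where
  "frogP r = pair_measure
     (PiM UNIV (\<lambda>_. measure_pmf (bernoulli_pmf r)))
     (PiM UNIV (\<lambda>_. measure_pmf (pmf_of_set (UNIV :: ('d \<times> bool) set))))"

definition unitstep :: "('d::finite) \<times> bool \<Rightarrow> int^'d" where
  "unitstep s = (\<chi> j. if j = fst s then (if snd s then 1 else -1) else 0)"

definition walk :: "('d::finite) frog_space \<Rightarrow> int^'d \<Rightarrow> nat \<Rightarrow> int^'d" where
  "walk w x k = x + (\<Sum>j<k. unitstep (snd w (x, j)))"

definition occupied :: "('d::finite) frog_space \<Rightarrow> (int^'d) set" where
  "occupied w = {x. fst w x}"

definition range_set :: "('d::finite) frog_space \<Rightarrow> (int^'d) set \<Rightarrow> nat \<Rightarrow> (int^'d) set" where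
  "range_set w A n = (\<Union>x\<in>A. {walk w x k | k. k \<le> n})"

definition linf :: "int^('d::finite) \<Rightarrow> int" where
  "linf z = Max (range (\<lambda>i. \<bar>z $ i\<bar>))"

definition lone :: "int^('d::finite) \<Rightarrow> int" where
  "lone z = (\<Sum>i\<in>UNIV. \<bar>z $ i\<bar>)"

definition ltwo :: "int^('d::finite) \<Rightarrow> real" where
  "ltwo z = sqrt (\<Sum>i\<in>UNIV. (real_of_int (z $ i))\<^sup>2)"

definition phi_d :: "nat \<Rightarrow> real \<Rightarrow> real" where
  "phi_d d t = (if d = 2 then t / ln t else t)"

definition delta_d :: "nat \<Rightarrow> real \<Rightarrow> real" where
  "delta_d d r = (if d = 2 then sqrt (\<bar>ln r\<bar> / r) else 1 / sqrt r)"

definition delta0 :: "nat \<Rightarrow> real" where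
  "delta0 d = (50 * real d) powr (- real d / 2)"

definition frog_const :: "'d::finite itself \<Rightarrow> real \<Rightarrow> bool" where
  "frog_const _ C \<longleftrightarrow> 0 < C \<and> C < 1 \<and>
    (\<forall>r n (A :: (int^'d) set) B.
       0 < r \<and> r \<le> 1 \<and> 2 \<le> n \<and> finite A \<and> finite B \<and>
       (\<forall>x\<in>A. \<forall>y\<in>B. ltwo (x - y) \<le> sqrt (real n)) \<and>
       real (card B) \<ge> delta0 CARD('d) * real n powr (real CARD('d) / 2) \<longrightarrow>
       (let m = min (C * phi_d CARD('d) (real n) * real (card A))
                    ((1 - delta0 CARD('d)) * real (card B)) in
        measure (frogP r :: 'd frog_space measure)
          {w \<in> space (frogP r). real (card (range_set w A n \<inter> B \<inter> occupied w)) < r / 2 * m}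
        \<le> exp (- C * real (card A)) + exp (- (r / 8) * m)))"

definition psi_d :: "real \<Rightarrow> nat \<Rightarrow> real \<Rightarrow> real" where
  "psi_d C d r = 2 * real d / C * (delta_d d r)\<^sup>2"

definition nu_d :: "real \<Rightarrow> nat \<Rightarrow> real \<Rightarrow> nat" where
  "nu_d C d r = 100 * d * nat \<lceil>psi_d C d r\<rceil>"

definition boxQ :: "real \<Rightarrow> real \<Rightarrow> int^('d::finite) \<Rightarrow> nat \<Rightarrow> (int^'d) set" where
  "boxQ C r \<xi> i = (let L = \<lceil>sqrt (psi_d C CARD('d) r)\<rceil> in
     {y. linf (y - (3 * L * int i) *s \<xi>) \<le> L})"

primrec Gamma :: "real \<Rightarrow> real \<Rightarrow> int^('d::finite) \<Rightarrow> 'd frog_space \<Rightarrow> nat \<Rightarrow> (int^'d) set" where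
  "Gamma C r \<xi> w 0 = boxQ C r \<xi> 0 \<inter> occupied w"
| "Gamma C r \<xi> w (Suc i) =
     range_set w (Gamma C r \<xi> w i) (nu_d C CARD('d) r) \<inter> boxQ C r \<xi> (Suc i) \<inter> occupied w"

definition sigma :: "real \<Rightarrow> real \<Rightarrow> int^('d::finite) \<Rightarrow> 'd frog_space \<Rightarrow> enat" where
  "sigma C r \<xi> w = (let P = (\<lambda>i. real (card (Gamma C r \<xi> w i)) < 2 * real CARD('d) / C * \<bar>ln r\<bar>)
     in if \<exists>i. P i then enat (LEAST i. P i) else \<infinity>)"

end

theory Submission
  imports Defs
begin

definition cyl :: "'i set \<Rightarrow> ('i \<Rightarrow> 'v) \<Rightarrow> ('i \<Rightarrow> 'v) set" where
  "cyl S a = {f. \<forall>x\<in>S. f x = a x}"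

lemma space_PiM_pmf[simp]: "space (PiM UNIV (\<lambda>_. measure_pmf p)) = UNIV"
  by (auto simp: space_PiM)

lemma cyl_emb: "cyl S a = prod_emb UNIV (\<lambda>_. measure_pmf p) S (PiE S (\<lambda>x. {a x}))"
  by (auto simp: cyl_def prod_emb_def space_PiM PiE_iff)

lemma cyl_sets: "finite S \<Longrightarrow> cyl S a \<in> sets (PiM UNIV (\<lambda>_. measure_pmf p))"
  unfolding cyl_emb[where p=p] by (rule sets_PiM_I) auto

lemma prob_PiM_pmf: "prob_space (PiM UNIV (\<lambda>_. measure_pmf p))"
  by (rule prob_space_PiM) (simp add: prob_space_measure_pmf)

lemma cyl_emeasure: "finite S \<Longrightarrow> emeasure (PiM UNIV (\<lambda>_. measure_pmf p)) (cyl S a) = ennreal (\<Prod>x\<in>S. pmf p (a x))"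
proof -
  assume "finite S"
  have "emeasure (PiM UNIV (\<lambda>_. measure_pmf p)) (cyl S a) = (\<Prod>x\<in>S. emeasure (measure_pmf p) {a x})"
    unfolding cyl_emb[where p=p] by (rule emeasure_PiM_emb) (auto simp: prob_space_measure_pmf \<open>finite S\<close>)
  also have "\<dots> = (\<Prod>x\<in>S. ennreal (pmf p (a x)))" by (simp add: emeasure_pmf_single)
  also have "\<dots> = ennreal (\<Prod>x\<in>S. pmf p (a x))" by (simp add: prod_ennreal)
  finally show ?thesis .
qed

lemma frogP_alt: "frogP r = PiM UNIV (\<lambda>_. measure_pmf (bernoulli_pmf r)) \<Otimes>\<^sub>M PiM UNIV (\<lambda>_. measure_pmf (pmf_of_set (UNIV :: ('d::finite \<times> bool) set)))"
  by (simp add: frogP_def)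

lemma frog_prob: "prob_space (frogP r :: ('d::finite) frog_space measure)"
  unfolding frogP_def by (intro prob_space_pair prob_PiM_pmf)

lemma space_frogP[simp]: "space (frogP r) = UNIV"
  by (simp add: frogP_def space_pair_measure)

lemma frog_box_sets: "finite S \<Longrightarrow> finite P \<Longrightarrow> cyl S a \<times> cyl P b \<in> sets (frogP r :: ('d::finite) frog_space measure)"
  unfolding frogP_def by (intro pair_measureI cyl_sets)

lemma frog_box_measure:
  assumes "finite S" "finite P"
  shows "measure (frogP r :: ('d::finite) frog_space measure) (cyl S a \<times> cyl P b) =
     (\<Prod>x\<in>S. pmf (bernoulli_pmf r) (a x)) * (\<Prod>q\<in>P. pmf (pmf_of_set (UNIV :: ('d \<times> bool) set)) (b q))"
proof -
  interpret S2: sigma_finite_measure "PiM UNIV (\<lambda>_. measure_pmf (pmf_of_set (UNIV :: ('d \<times> bool) set)))"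
    using prob_PiM_pmf by (rule prob_space_imp_sigma_finite)
  have "emeasure (frogP r :: ('d::finite) frog_space measure) (cyl S a \<times> cyl P b) =
     ennreal (\<Prod>x\<in>S. pmf (bernoulli_pmf r) (a x)) * ennreal (\<Prod>q\<in>P. pmf (pmf_of_set (UNIV :: ('d \<times> bool) set)) (b q))"
    unfolding frogP_def
    by (subst S2.emeasure_pair_measure_Times) (auto intro!: cyl_sets simp: cyl_emeasure assms)
  then show ?thesis
    by (simp add: measure_def ennreal_mult'[symmetric] prod_nonneg)
qed

definition pt :: "'a set \<Rightarrow> 'b set \<Rightarrow> ('a \<Rightarrow> 'x) \<times> ('b \<Rightarrow> 'y) \<Rightarrow> ('a \<Rightarrow> 'x) \<times> ('b \<Rightarrow> 'y)" where
  "pt S P w = (restrict (fst w) S, restrict (snd w) P)"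

definition dep :: "'a set \<Rightarrow> 'b set \<Rightarrow> (('a \<Rightarrow> 'x) \<times> ('b \<Rightarrow> 'y)) set \<Rightarrow> bool" where
  "dep S P X \<longleftrightarrow> (\<forall>w w'. (\<forall>x\<in>S. fst w x = fst w' x) \<and> (\<forall>q\<in>P. snd w q = snd w' q) \<longrightarrow> (w \<in> X \<longleftrightarrow> w' \<in> X))"

lemma pt_eq_iff: "pt S P w = pt S P w' \<longleftrightarrow> (\<forall>x\<in>S. fst w x = fst w' x) \<and> (\<forall>q\<in>P. snd w q = snd w' q)"
  unfolding pt_def by (auto simp: restrict_def fun_eq_iff split: if_splits)

lemma piece_eq: "{w. pt S P w = pt S P w0} = cyl S (fst w0) \<times> cyl P (snd w0)"
  unfolding pt_eq_iff cyl_def by auto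

lemma dep_union: "dep S P X \<Longrightarrow> X = (\<Union>u\<in>pt S P ` X. {w. pt S P w = u})"
  unfolding dep_def pt_eq_iff[symmetric] by blast

lemma finite_range_pt:
  assumes "finite S" "finite P"
  shows "finite (range (pt S P :: ('a \<Rightarrow> 'x::finite) \<times> ('b \<Rightarrow> 'y::finite) \<Rightarrow> _))"
proof (rule finite_subset)
  show "range (pt S P :: ('a \<Rightarrow> 'x::finite) \<times> ('b \<Rightarrow> 'y::finite) \<Rightarrow> _) \<subseteq> (PiE S (\<lambda>_. UNIV)) \<times> (PiE P (\<lambda>_. UNIV))"
    by (auto simp: pt_def)
  show "finite ((PiE S (\<lambda>_. UNIV :: 'x set)) \<times> (PiE P (\<lambda>_. UNIV :: 'y set)))"
    using assms by (intro finite_cartesian_product finite_PiE) auto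
qed

lemma dep_mono: "dep S P X \<Longrightarrow> S \<subseteq> S' \<Longrightarrow> P \<subseteq> P' \<Longrightarrow> dep S' P' X"
  unfolding dep_def by blast

lemma dep_Int: "dep S P X \<Longrightarrow> dep S P Y \<Longrightarrow> dep S P (X \<inter> Y)"
  unfolding dep_def by blast

lemma dep_Compl: "dep S P X \<Longrightarrow> dep S P (- X)"
  unfolding dep_def by blast

context
  fixes r :: real
begin

abbreviation "FP \<equiv> (frogP r :: ('d::finite) frog_space measure)"

lemma piece_sets: "finite S \<Longrightarrow> finite P \<Longrightarrow> {w. pt S P w = pt S P w0} \<in> sets (FP :: ('d::finite) frog_space measure)"
  unfolding piece_eq by (rule frog_box_sets)

lemma dep_decomp:
  fixes X :: "('d::finite) frog_space set"
  assumes "finite S" "finite P" "dep S P X"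
  shows "X \<in> sets FP" "measure FP X = (\<Sum>u\<in>pt S P ` X. measure FP {w. pt S P w = u})"
proof -
  have fin: "finite (pt S P ` X)"
    using finite_range_pt[OF assms(1,2)] by (rule finite_subset[rotated]) auto
  have sets: "(\<lambda>u. {w. pt S P w = u}) ` (pt S P ` X) \<subseteq> sets FP"
    using piece_sets[OF assms(1,2)] by auto
  have disj: "disjoint_family_on (\<lambda>u. {w. pt S P w = u}) (pt S P ` X)"
    by (auto simp: disjoint_family_on_def)
  have eq: "X = (\<Union>u\<in>pt S P ` X. {w. pt S P w = u})" using dep_union[OF assms(3)] .
  show "X \<in> sets FP"
    by (subst eq, rule sets.finite_UN) (use fin sets in auto)
  show "measure FP X = (\<Sum>u\<in>pt S P ` X. measure FP {w. pt S P w = u})"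
    apply (subst eq)
    apply (rule measure_finite_Union[OF fin sets disj])
    using finite_measure.emeasure_finite[OF prob_space.axioms(1)[OF frog_prob]] by auto
qed

lemma cyl_Int: "S1 \<inter> S2 = {} \<Longrightarrow> cyl S1 a1 \<inter> cyl S2 a2 = cyl (S1 \<union> S2) (\<lambda>x. if x \<in> S1 then a1 x else a2 x)"
  unfolding cyl_def by auto

lemma piece_Int_measure:
  assumes "finite S1" "finite P1" "finite S2" "finite P2" "S1 \<inter> S2 = {}" "P1 \<inter> P2 = {}"
  shows "measure (FP :: ('d::finite) frog_space measure) ({w. pt S1 P1 w = pt S1 P1 w1} \<inter> {w. pt S2 P2 w = pt S2 P2 w2})
     = measure FP {w. pt S1 P1 w = pt S1 P1 w1} * measure FP {w. pt S2 P2 w = pt S2 P2 w2}"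
proof -
  have e: "{w. pt S1 P1 w = pt S1 P1 w1} \<inter> {w. pt S2 P2 w = pt S2 P2 w2} =
     cyl (S1 \<union> S2) (\<lambda>x. if x \<in> S1 then fst w1 x else fst w2 x) \<times> cyl (P1 \<union> P2) (\<lambda>x. if x \<in> P1 then snd w1 x else snd w2 x)"
    unfolding piece_eq using assms(5,6) by (auto simp: cyl_Int[symmetric])
  have p1: "(\<Prod>x\<in>S1 \<union> S2. pmf (bernoulli_pmf r) (if x \<in> S1 then fst w1 x else fst w2 x)) =
      (\<Prod>x\<in>S1. pmf (bernoulli_pmf r) (fst w1 x)) * (\<Prod>x\<in>S2. pmf (bernoulli_pmf r) (fst w2 x))"
    using assms by (subst prod.union_disjoint) (auto intro!: arg_cong2[where f="(*)"] prod.cong)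
  show ?thesis
    unfolding e
    unfolding piece_eq using assms
    by (simp add: frog_box_measure p1 card_Un_disjoint power_add)
  qed


lemma dep_indep:
  fixes X Y :: "('d::finite) frog_space set"
  assumes fin: "finite S1" "finite P1" "finite S2" "finite P2" and dis: "S1 \<inter> S2 = {}" "P1 \<inter> P2 = {}"
    and dX: "dep S1 P1 X" and dY: "dep S2 P2 Y"
  shows "measure FP (X \<inter> Y) = measure FP X * measure FP Y"
proof -
  let ?U1 = "pt S1 P1 ` X" and ?U2 = "pt S2 P2 ` Y"
  let ?A = "\<lambda>p. {w. pt S1 P1 w = fst p} \<inter> {w. pt S2 P2 w = snd p}"
  have fin1: "finite ?U1"
    using finite_range_pt[OF fin(1,2)] by (rule finite_subset[rotated]) auto
  have fin2: "finite ?U2"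
    using finite_range_pt[OF fin(3,4)] by (rule finite_subset[rotated]) auto
  have eq: "X \<inter> Y = (\<Union>p\<in>?U1 \<times> ?U2. ?A p)"
  proof (intro equalityI subsetI)
    fix w assume "w \<in> X \<inter> Y" then show "w \<in> (\<Union>p\<in>?U1 \<times> ?U2. ?A p)"
      by (intro UN_I[of "(pt S1 P1 w, pt S2 P2 w)"]) auto
  next
    fix w assume "w \<in> (\<Union>p\<in>?U1 \<times> ?U2. ?A p)"
    then obtain x y where xy: "x \<in> X" "y \<in> Y" "pt S1 P1 w = pt S1 P1 x" "pt S2 P2 w = pt S2 P2 y" by auto
    have "w \<in> X" using dX xy(1,3) unfolding dep_def pt_eq_iff by blast
    moreover have "w \<in> Y" using dY xy(2,4) unfolding dep_def pt_eq_iff by blast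
    ultimately show "w \<in> X \<inter> Y" by simp
  qed
  have sets: "?A ` (?U1 \<times> ?U2) \<subseteq> sets FP"
    using piece_sets[OF fin(1,2)] piece_sets[OF fin(3,4)] by auto
  have disj: "disjoint_family_on ?A (?U1 \<times> ?U2)"
    by (auto simp: disjoint_family_on_def)
  have "measure FP (X \<inter> Y) = (\<Sum>p\<in>?U1 \<times> ?U2. measure FP (?A p))"
    apply (subst eq)
    apply (rule measure_finite_Union[OF _ sets disj])
    using fin1 fin2 finite_measure.emeasure_finite[OF prob_space.axioms(1)[OF frog_prob]] by auto
  also have "\<dots> = (\<Sum>p\<in>?U1 \<times> ?U2. measure FP {w. pt S1 P1 w = fst p} * measure FP {w. pt S2 P2 w = snd p})"
  proof (rule sum.cong[OF refl])
    fix p assume "p \<in> ?U1 \<times> ?U2"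
    then obtain x y where "fst p = pt S1 P1 x" "snd p = pt S2 P2 y" by auto
    then show "measure FP (?A p) = measure FP {w. pt S1 P1 w = fst p} * measure FP {w. pt S2 P2 w = snd p}"
      using piece_Int_measure[OF fin dis, of x y] by simp
  qed
  also have "\<dots> = (\<Sum>u\<in>?U1. measure FP {w. pt S1 P1 w = u}) * (\<Sum>v\<in>?U2. measure FP {w. pt S2 P2 w = v})"
    by (simp add: sum_product sum.cartesian_product case_prod_beta)
  also have "\<dots> = measure FP X * measure FP Y"
    using dep_decomp(2)[OF fin(1,2) dX] dep_decomp(2)[OF fin(3,4) dY] by simp
  finally show ?thesis .
qed

end

lemma linf_le_iff: "linf (z :: int^'d::finite) \<le> L \<longleftrightarrow> (\<forall>k. \<bar>z $ k\<bar> \<le> L)"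
  unfolding linf_def by (subst Max_le_iff) auto

lemma lone_xi:
  fixes \<xi> :: "int^'d::finite"
  assumes "lone \<xi> = 1"
  shows "\<And>k. \<bar>\<xi> $ k\<bar> \<le> 1" "\<exists>c. \<xi> $ c \<noteq> 0"
proof -
  fix k
  have "\<bar>\<xi> $ k\<bar> \<le> (\<Sum>i\<in>UNIV. \<bar>\<xi> $ i\<bar>)"
    by (rule member_le_sum) auto
  then show "\<bar>\<xi> $ k\<bar> \<le> 1" using assms by (simp add: lone_def)
next
  show "\<exists>c. \<xi> $ c \<noteq> 0"
  proof (rule ccontr)
    assume "\<not> ?thesis"
    then have "lone \<xi> = 0" by (simp add: lone_def)
    then show False using assms by simp
  qed
qed

lemma boxQ_iff: "y \<in> boxQ C r \<xi> i \<longleftrightarrow> (\<forall>k. \<bar>y $ k - 3 * \<lceil>sqrt (psi_d C CARD('d) r)\<rceil> * int i * \<xi> $ k\<bar> \<le> \<lceil>sqrt (psi_d C CARD('d) r)\<rceil>)"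
  for y :: "int^'d::finite"
  unfolding boxQ_def Let_def by (simp add: linf_le_iff mult.assoc)

lemma cube_card:
  assumes "L \<ge> 0"
  shows "finite {z :: int^'d::finite. \<forall>k. \<bar>z $ k\<bar> \<le> L}" "card {z :: int^'d::finite. \<forall>k. \<bar>z $ k\<bar> \<le> L} = nat (2 * L + 1) ^ CARD('d)"
proof -
  have bij: "bij_betw vec_nth {z :: int^'d::finite. \<forall>k. \<bar>z $ k\<bar> \<le> L} (PiE UNIV (\<lambda>_. {-L..L}))"
    unfolding bij_betw_def
  proof
    show "inj_on vec_nth {z :: int^'d::finite. \<forall>k. \<bar>z $ k\<bar> \<le> L}"
      by (auto simp: inj_on_def vec_nth_inject)
    show "vec_nth ` {z :: int^'d. \<forall>k. \<bar>z $ k\<bar> \<le> L} = (PiE UNIV (\<lambda>_. {-L..L}))"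
    proof (intro equalityI subsetI)
      fix f assume "f \<in> vec_nth ` {z :: int^'d. \<forall>k. \<bar>z $ k\<bar> \<le> L}"
      then obtain z :: "int^'d" where z: "f = vec_nth z" "\<forall>k. \<bar>z $ k\<bar> \<le> L" by auto
      have "z $ k \<in> {-L..L}" for k using z(2)[rule_format, of k] by auto
      then show "f \<in> PiE UNIV (\<lambda>_. {-L..L})" using z(1) by (auto simp: PiE_iff)
    next
      fix f :: "'d \<Rightarrow> int" assume f: "f \<in> PiE UNIV (\<lambda>_. {-L..L})"
      have fk: "-L \<le> f k \<and> f k \<le> L" for k using f by (auto simp: PiE_iff)
      have fa: "\<bar>f k\<bar> \<le> L" for k using fk[of k] by (auto simp: abs_le_iff)
      show "f \<in> vec_nth ` {z :: int^'d. \<forall>k. \<bar>z $ k\<bar> \<le> L}"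
        by (intro image_eqI[of _ _ "vec_lambda f"]) (use fa in auto)
    qed
  qed
  have fin: "finite (PiE UNIV (\<lambda>_::'d. {-L..L}))" by (rule finite_PiE) auto
  show "finite {z :: int^'d::finite. \<forall>k. \<bar>z $ k\<bar> \<le> L}"
    using bij_betw_finite[OF bij] fin by simp
  have "card {z :: int^'d::finite. \<forall>k. \<bar>z $ k\<bar> \<le> L} = card (PiE UNIV (\<lambda>_::'d. {-L..L}))"
    using bij_betw_same_card[OF bij] .
  also have "\<dots> = nat (2 * L + 1) ^ CARD('d)"
    by (simp add: card_PiE)
  finally show "card {z :: int^'d::finite. \<forall>k. \<bar>z $ k\<bar> \<le> L} = nat (2 * L + 1) ^ CARD('d)" .
qed

lemma boxQ_translate: "boxQ C r \<xi> i = (\<lambda>z. z + (3 * \<lceil>sqrt (psi_d C CARD('d) r)\<rceil> * int i) *s \<xi>) ` {z :: int^'d::finite. \<forall>k. \<bar>z $ k\<bar> \<le> \<lceil>sqrt (psi_d C CARD('d) r)\<rceil>}"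
proof (intro equalityI subsetI)
  fix y assume "y \<in> boxQ C r \<xi> i"
  then show "y \<in> (\<lambda>z. z + (3 * \<lceil>sqrt (psi_d C CARD('d) r)\<rceil> * int i) *s \<xi>) ` {z :: int^'d::finite. \<forall>k. \<bar>z $ k\<bar> \<le> \<lceil>sqrt (psi_d C CARD('d) r)\<rceil>}"
    unfolding boxQ_iff
    by (intro image_eqI[of _ _ "y - (3 * \<lceil>sqrt (psi_d C CARD('d) r)\<rceil> * int i) *s \<xi>"]) (auto simp: mult.assoc)
next
  fix y assume "y \<in> (\<lambda>z. z + (3 * \<lceil>sqrt (psi_d C CARD('d) r)\<rceil> * int i) *s \<xi>) ` {z :: int^'d::finite. \<forall>k. \<bar>z $ k\<bar> \<le> \<lceil>sqrt (psi_d C CARD('d) r)\<rceil>}"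
  then show "y \<in> boxQ C r \<xi> i" unfolding boxQ_iff by (auto simp: mult.assoc)
qed

lemma boxQ_card:
  assumes "psi_d C CARD('d) r \<ge> 0"
  shows "finite (boxQ C r \<xi> i :: (int^'d::finite) set)"
    "card (boxQ C r \<xi> i :: (int^'d::finite) set) = nat (2 * \<lceil>sqrt (psi_d C CARD('d) r)\<rceil> + 1) ^ CARD('d)"
proof -
  have "sqrt (psi_d C CARD('d) r) \<ge> 0" using assms by simp
  then have L: "\<lceil>sqrt (psi_d C CARD('d) r)\<rceil> \<ge> 0" by (metis ceiling_mono ceiling_zero)
  show "finite (boxQ C r \<xi> i :: (int^'d::finite) set)"
    unfolding boxQ_translate using cube_card(1)[OF L] by (rule finite_imageI)
  show "card (boxQ C r \<xi> i :: (int^'d::finite) set) = nat (2 * \<lceil>sqrt (psi_d C CARD('d) r)\<rceil> + 1) ^ CARD('d)"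
    unfolding boxQ_translate by (subst card_image) (auto simp: inj_on_def cube_card(2)[OF L])
qed

lemma boxQ_disjoint:
  fixes \<xi> :: "int^'d::finite"
  assumes "lone \<xi> = 1" "psi_d C CARD('d) r > 0" "i \<noteq> j"
  shows "boxQ C r \<xi> i \<inter> boxQ C r \<xi> j = {}"
proof (rule ccontr)
  let ?L = "\<lceil>sqrt (psi_d C CARD('d) r)\<rceil>"
  have L1: "?L \<ge> 1" using assms(2) by (simp add: zero_less_ceiling)
  obtain c where c: "\<xi> $ c \<noteq> 0" using lone_xi(2)[OF assms(1)] by blast
  have c1: "\<bar>\<xi> $ c\<bar> = 1" using lone_xi(1)[OF assms(1), of c] c by linarith
  assume "\<not> ?thesis"
  then obtain y where "y \<in> boxQ C r \<xi> i" "y \<in> boxQ C r \<xi> j" by blast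
  then have a: "\<bar>y $ c - 3 * ?L * int i * \<xi> $ c\<bar> \<le> ?L" "\<bar>y $ c - 3 * ?L * int j * \<xi> $ c\<bar> \<le> ?L"
    unfolding boxQ_iff by blast+
  have "\<bar>3 * ?L * (int i - int j) * \<xi> $ c\<bar> \<le> 2 * ?L" using a by (simp add: algebra_simps abs_le_iff)
  moreover have "\<bar>3 * ?L * (int i - int j) * \<xi> $ c\<bar> = 3 * ?L * \<bar>int i - int j\<bar>"
  proof -
    have La: "\<bar>?L\<bar> = ?L" by (rule abs_of_nonneg) (use L1 in linarith)
    show ?thesis by (simp add: abs_mult La c1)
  qed
  ultimately have h: "3 * ?L * \<bar>int i - int j\<bar> \<le> 2 * ?L" by linarith
  have D: "\<bar>int i - int j\<bar> \<ge> 1" using assms(3) by linarith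
  have "3 * ?L * (\<bar>int i - int j\<bar> - 1) \<ge> 0"
    using D L1 by (intro mult_nonneg_nonneg; linarith)
  then show False using h L1 by (simp add: algebra_simps)
qed

lemma boxQ_dist:
  fixes \<xi> :: "int^'d::finite"
  assumes "lone \<xi> = 1" "psi_d C CARD('d) r \<ge> 1" "j = i \<or> j = Suc i"
    and "x \<in> boxQ C r \<xi> i" "y \<in> boxQ C r \<xi> j"
  shows "ltwo (x - y) \<le> sqrt (real (nu_d C CARD('d) r))"
proof -
  let ?p = "psi_d C CARD('d) r"
  let ?L = "\<lceil>sqrt ?p\<rceil>"
  have k: "\<bar>(x - y) $ k\<bar> \<le> 5 * ?L" for k
  proof -
    have a: "\<bar>x $ k - 3 * ?L * int i * \<xi> $ k\<bar> \<le> ?L" "\<bar>y $ k - 3 * ?L * int j * \<xi> $ k\<bar> \<le> ?L"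
      using assms(4,5) unfolding boxQ_iff by blast+
    have "sqrt ?p \<ge> 0" using assms(2) by simp
    then have L0: "?L \<ge> 0" by (metis ceiling_mono ceiling_zero)
    have m: "?L * \<bar>\<xi> $ k\<bar> \<le> ?L" by (rule mult_left_le[OF lone_xi(1)[OF assms(1)] L0])
    have La: "\<bar>?L\<bar> = ?L" by (rule abs_of_nonneg) (use L0 in linarith)
    have "\<bar>3 * ?L * (int j - int i) * \<xi> $ k\<bar> \<le> 3 * ?L"
      using assms(3) m La L0 by (cases "j = i") (simp_all add: abs_mult)
    then show ?thesis using a by (simp add: algebra_simps abs_le_iff)
  qed
  have Lr: "real_of_int ?L \<le> 2 * sqrt ?p"
  proof -
    have "real_of_int ?L < sqrt ?p + 1" by linarith
    moreover have "sqrt ?p \<ge> 1" using assms(2) by simp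
    ultimately show ?thesis by linarith
  qed
  have "sqrt ?p \<ge> 0" using assms(2) by simp
  then have L0: "real_of_int ?L \<ge> 0" by (metis ceiling_mono ceiling_zero of_int_0_le_iff)
  have sq: "(real_of_int ((x - y) $ k))\<^sup>2 \<le> 100 * ?p" for k
  proof -
    have "real_of_int \<bar>(x - y) $ k\<bar> \<le> real_of_int (5 * ?L)" using k[of k] by (simp only: of_int_le_iff)
    then have "\<bar>real_of_int ((x - y) $ k)\<bar> \<le> 5 * real_of_int ?L" by simp
    then have a: "\<bar>real_of_int ((x - y) $ k)\<bar> \<le> 10 * sqrt ?p" using Lr by linarith
    have "(\<bar>real_of_int ((x - y) $ k)\<bar>)\<^sup>2 \<le> (10 * sqrt ?p)\<^sup>2"
      by (rule power_mono[OF a abs_ge_zero])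
    then have "(real_of_int ((x - y) $ k))\<^sup>2 \<le> (10 * sqrt ?p)\<^sup>2" by simp
    also have "\<dots> = 100 * ?p" using assms(2) by (simp add: power_mult_distrib)
    finally show ?thesis .
  qed
  have "(\<Sum>k\<in>UNIV. (real_of_int ((x - y) $ k))\<^sup>2) \<le> (\<Sum>k\<in>(UNIV::'d set). 100 * ?p)"
    by (rule sum_mono) (rule sq)
  also have "\<dots> = real CARD('d) * 100 * ?p" by simp
  also have "\<dots> \<le> real (nu_d C CARD('d) r)"
  proof -
    have "?p \<le> real (nat \<lceil>?p\<rceil>)" using assms(2) by linarith
    then show ?thesis unfolding nu_d_def by (simp add: mult_left_mono)
  qed
  finally show ?thesis unfolding ltwo_def by (rule real_sqrt_le_mono)
qed

definition Sset :: "real \<Rightarrow> real \<Rightarrow> int^('d::finite) \<Rightarrow> nat \<Rightarrow> (int^'d) set" where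
  "Sset C r \<xi> i = (\<Union>j\<le>i. boxQ C r \<xi> j)"

definition Pset :: "real \<Rightarrow> real \<Rightarrow> int^('d::finite) \<Rightarrow> nat \<Rightarrow> ((int^'d) \<times> nat) set" where
  "Pset C r \<xi> i = (\<Union>j<i. boxQ C r \<xi> j) \<times> {..<nu_d C CARD('d) r}"

lemma walk_agree: "(\<forall>j<k. snd w (x,j) = snd w' (x,j)) \<Longrightarrow> walk w x k = walk w' x k"
  unfolding walk_def by (auto intro!: sum.cong)

lemma range_agree: "(\<forall>x\<in>A. \<forall>j<n. snd w (x,j) = snd w' (x,j)) \<Longrightarrow> range_set w A n = range_set w' A n"
  unfolding range_set_def
proof (intro SUP_cong refl)
  fix x assume "\<forall>x\<in>A. \<forall>j<n. snd w (x,j) = snd w' (x,j)" "x \<in> A"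
  then have "\<And>k. k \<le> n \<Longrightarrow> walk w x k = walk w' x k" by (intro walk_agree) auto
  then show "{walk w x k |k. k \<le> n} = {walk w' x k |k. k \<le> n}" by metis
qed

lemma occ_agree: "(\<forall>x\<in>B. fst w x = fst w' x) \<Longrightarrow> occupied w \<inter> B = occupied w' \<inter> B"
  unfolding occupied_def by auto

lemma Gamma_sub: "Gamma C r \<xi> w i \<subseteq> boxQ C r \<xi> i"
  by (cases i) auto

lemma Gamma_agree:
  fixes w w' :: "('d::finite) frog_space"
  shows "(\<forall>x\<in>Sset C r \<xi> i. fst w x = fst w' x) \<Longrightarrow> (\<forall>q\<in>Pset C r \<xi> i. snd w q = snd w' q) \<Longrightarrow>
   Gamma C r \<xi> w i = Gamma C r \<xi> w' i"
proof (induction i)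
  case 0
  then have "occupied w \<inter> boxQ C r \<xi> 0 = occupied w' \<inter> boxQ C r \<xi> 0"
    by (intro occ_agree) (auto simp: Sset_def)
  then show ?case by auto
next
  case (Suc i)
  have IH: "Gamma C r \<xi> w i = Gamma C r \<xi> w' i"
  proof (rule Suc.IH)
    show "\<forall>x\<in>Sset C r \<xi> i. fst w x = fst w' x" using Suc.prems(1) by (auto simp: Sset_def)
    have "Pset C r \<xi> i \<subseteq> Pset C r \<xi> (Suc i)" unfolding Pset_def by (intro Sigma_mono) (auto intro: less_SucI)
    then show "\<forall>q\<in>Pset C r \<xi> i. snd w q = snd w' q" using Suc.prems(2) by blast
  qed
  have R: "range_set w (Gamma C r \<xi> w i) (nu_d C CARD('d) r) = range_set w' (Gamma C r \<xi> w i) (nu_d C CARD('d) r)"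
  proof (rule range_agree, intro ballI allI impI)
    fix x j assume "x \<in> Gamma C r \<xi> w i" "j < nu_d C CARD('d) r"
    then have "(x, j) \<in> Pset C r \<xi> (Suc i)"
      using Gamma_sub[of C r \<xi> w i] by (auto simp: Pset_def)
    then show "snd w (x, j) = snd w' (x, j)" using Suc.prems(2) by blast
  qed
  have O: "occupied w \<inter> boxQ C r \<xi> (Suc i) = occupied w' \<inter> boxQ C r \<xi> (Suc i)"
    using Suc.prems(1) by (intro occ_agree) (auto simp: Sset_def)
  show ?case using IH R O by (auto simp del: Int_iff)
qed

lemma dep_Gamma: "dep (Sset C r \<xi> i) (Pset C r \<xi> i) {w. Pr (Gamma C r \<xi> w i)}"
  unfolding dep_def using Gamma_agree by (metis (no_types, lifting) mem_Collect_eq)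

lemma dep_range: "dep B (A \<times> {..<n}) {w. Pr (range_set w A n \<inter> B \<inter> occupied w)}"
  unfolding dep_def
proof (intro allI impI)
  fix w w' :: "('a::finite) frog_space"
  assume a: "(\<forall>x\<in>B. fst w x = fst w' x) \<and> (\<forall>q\<in>A \<times> {..<n}. snd w q = snd w' q)"
  have "range_set w A n = range_set w' A n" using a by (intro range_agree) auto
  moreover have "occupied w \<inter> B = occupied w' \<inter> B" using a by (intro occ_agree) auto
  ultimately have "range_set w A n \<inter> B \<inter> occupied w = range_set w' A n \<inter> B \<inter> occupied w'" by blast
  then show "(w \<in> {w. Pr (range_set w A n \<inter> B \<inter> occupied w)}) = (w' \<in> {w. Pr (range_set w A n \<inter> B \<inter> occupied w)})"
    by simp
qed

lemma finite_Sset: "psi_d C CARD('d) r \<ge> 0 \<Longrightarrow> finite (Sset C r (\<xi> :: int^'d::finite) i)"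
  unfolding Sset_def using boxQ_card(1) by blast

lemma finite_Pset: "psi_d C CARD('d) r \<ge> 0 \<Longrightarrow> finite (Pset C r (\<xi> :: int^'d::finite) i)"
  unfolding Pset_def using boxQ_card(1) by blast

lemma Sset_disj:
  assumes "lone \<xi> = 1" "psi_d C CARD('d) r > 0"
  shows "Sset C r (\<xi> :: int^'d::finite) i \<inter> boxQ C r \<xi> (Suc i) = {}"
proof -
  have "\<forall>j\<in>{..i}. boxQ C r \<xi> j \<inter> boxQ C r \<xi> (Suc i) = {}"
    using boxQ_disjoint[OF assms] by simp
  then show ?thesis unfolding Sset_def by blast
qed

lemma Pset_disj:
  assumes "lone \<xi> = 1" "psi_d C CARD('d) r > 0" "A \<subseteq> boxQ C r \<xi> i"
  shows "Pset C r (\<xi> :: int^'d::finite) i \<inter> (A \<times> {..<n}) = {}"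
proof -
  have "\<forall>j\<in>{..<i}. boxQ C r \<xi> j \<inter> boxQ C r \<xi> i = {}"
    using boxQ_disjoint[OF assms(1,2)] by simp
  then show ?thesis unfolding Pset_def using assms(3) by blast
qed

definition thr :: "real \<Rightarrow> nat \<Rightarrow> real \<Rightarrow> real" where
  "thr C d r = 2 * real d / C * \<bar>ln r\<bar>"

definition Qc :: "real \<Rightarrow> nat \<Rightarrow> real \<Rightarrow> real" where
  "Qc C d r = real (nat (2 * \<lceil>sqrt (psi_d C d r)\<rceil> + 1) ^ d)"

definition mf :: "real \<Rightarrow> nat \<Rightarrow> real \<Rightarrow> real \<Rightarrow> real" where
  "mf C d r a = min (C * phi_d d (real (nu_d C d r)) * a) ((1 - delta0 d) * Qc C d r)"

definition beta :: "real \<Rightarrow> nat \<Rightarrow> real \<Rightarrow> real" where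
  "beta C d r = exp (- C * thr C d r) + exp (- (r / 8) * mf C d r (thr C d r))"

lemma frog_fin: "finite_measure (frogP r)"
  by (rule prob_space.axioms(1)[OF frog_prob])

context
  fixes C r :: real and \<xi> :: "int^'d::finite"
  assumes fc: "frog_const TYPE('d) C"
    and r: "0 < r" "r \<le> 1"
    and xi: "lone \<xi> = 1"
    and psi1: "psi_d C CARD('d) r \<ge> 1"
    and dens: "delta0 CARD('d) * real (nu_d C CARD('d) r) powr (real CARD('d) / 2) \<le> Qc C CARD('d) r"
    and good: "thr C CARD('d) r \<le> r / 2 * mf C CARD('d) r (thr C CARD('d) r)"
    and QT: "thr C CARD('d) r \<le> Qc C CARD('d) r"
    and phipos: "phi_d CARD('d) (real (nu_d C CARD('d) r)) \<ge> 0"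
    and nu2: "2 \<le> nu_d C CARD('d) r"
begin

lemma C_pos: "0 < C" using fc by (simp add: frog_const_def)

lemma card_Q: "real (card (boxQ C r \<xi> j)) = Qc C CARD('d) r"
  using boxQ_card(2)[of C r \<xi> j] psi1 by (simp add: Qc_def)

lemma finite_Q: "finite (boxQ C r \<xi> j)"
  using boxQ_card(1)[of C r \<xi> j] psi1 by simp

lemma fcA:
  assumes "finite A" "finite B" "\<forall>x\<in>A. \<forall>y\<in>B. ltwo (x - y) \<le> sqrt (real (nu_d C CARD('d) r))"
    "real (card B) \<ge> delta0 CARD('d) * real (nu_d C CARD('d) r) powr (real CARD('d) / 2)"
  shows "measure (frogP r :: 'd frog_space measure) {w \<in> space (frogP r :: 'd frog_space measure). real (card (range_set w A (nu_d C CARD('d) r) \<inter> B \<inter> occupied w)) <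
       r / 2 * min (C * phi_d CARD('d) (real (nu_d C CARD('d) r)) * real (card A)) ((1 - delta0 CARD('d)) * real (card B))}
     \<le> exp (- C * real (card A)) + exp (- (r / 8) * min (C * phi_d CARD('d) (real (nu_d C CARD('d) r)) * real (card A)) ((1 - delta0 CARD('d)) * real (card B)))"
  using fc r nu2 assms unfolding frog_const_def Let_def by blast

lemma per_A:
  assumes A: "A \<subseteq> boxQ C r \<xi> i" "(thr C CARD('d) r) \<le> real (card A)" and j: "j = i \<or> j = Suc i"
  shows "measure (frogP r :: 'd frog_space measure) {w. real (card (range_set w A (nu_d C CARD('d) r) \<inter> boxQ C r \<xi> j \<inter> occupied w)) < thr C CARD('d) r} \<le> beta C CARD('d) r"
proof -
  have finA: "finite A" using finite_subset[OF A(1) finite_Q] .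
  let ?m = "min (C * phi_d CARD('d) (real (nu_d C CARD('d) r)) * real (card A)) ((1 - delta0 CARD('d)) * real (card (boxQ C r \<xi> j)))"
  have "C * phi_d CARD('d) (real (nu_d C CARD('d) r)) * (thr C CARD('d) r) \<le> C * phi_d CARD('d) (real (nu_d C CARD('d) r)) * real (card A)"
    using C_pos phipos A(2) by (intro mult_left_mono) auto
  then have mm: "mf C CARD('d) r (thr C CARD('d) r) \<le> ?m" unfolding mf_def card_Q by linarith
  let ?G = "{w \<in> space (frogP r :: 'd frog_space measure). real (card (range_set w A (nu_d C CARD('d) r) \<inter> boxQ C r \<xi> j \<inter> occupied w)) < r / 2 * ?m}"
  have sub: "{w. real (card (range_set w A (nu_d C CARD('d) r) \<inter> boxQ C r \<xi> j \<inter> occupied w)) < thr C CARD('d) r} \<subseteq> ?G"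
  proof -
    have "(thr C CARD('d) r) \<le> r / 2 * ?m" using good mm r by (smt (verit) mult_left_mono half_gt_zero)
    then show ?thesis by auto
  qed
  have dG: "dep (boxQ C r \<xi> j) (A \<times> {..<(nu_d C CARD('d) r)}) ?G"
    using dep_range[of "boxQ C r \<xi> j" A "nu_d C CARD('d) r" "\<lambda>X. real (card X) < r / 2 * ?m"] by simp
  have Gs: "?G \<in> sets (frogP r :: 'd frog_space measure)"
    by (rule dep_decomp(1)[OF finite_Q _ dG]) (use finA in auto)
  have "measure (frogP r :: 'd frog_space measure) {w. real (card (range_set w A (nu_d C CARD('d) r) \<inter> boxQ C r \<xi> j \<inter> occupied w)) < thr C CARD('d) r} \<le> measure (frogP r :: 'd frog_space measure) ?G"
    by (rule finite_measure.finite_measure_mono[OF frog_fin sub Gs])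
  also have "\<dots> \<le> exp (- C * real (card A)) + exp (- (r / 8) * ?m)"
  proof (rule fcA[OF finA finite_Q])
    show "\<forall>x\<in>A. \<forall>y\<in>boxQ C r \<xi> j. ltwo (x - y) \<le> sqrt (real (nu_d C CARD('d) r))"
      using boxQ_dist[OF xi psi1 j] A(1) by blast
    show "delta0 CARD('d) * real (nu_d C CARD('d) r) powr (real CARD('d) / 2) \<le> real (card (boxQ C r \<xi> j))"
      using dens card_Q by simp
  qed
  also have "\<dots> \<le> beta C CARD('d) r"
    unfolding beta_def
  proof (rule add_mono)
    show "exp (- C * real (card A)) \<le> exp (- C * (thr C CARD('d) r))"
      using C_pos A(2) by simp
    show "exp (- (r / 8) * ?m) \<le> exp (- (r / 8) * mf C CARD('d) r (thr C CARD('d) r))"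
      using mm r by (simp add: mult_left_mono)
  qed
  finally show ?thesis .
qed


lemma Ev_dep: "dep (Sset C r \<xi> i) (Pset C r \<xi> i) {w. real (card (Gamma C r \<xi> w i)) < thr C CARD('d) r}"
  using dep_Gamma[of C r \<xi> i "\<lambda>X. real (card X) < thr C CARD('d) r"] by simp

lemma Ev_sets: "{w. real (card (Gamma C r \<xi> w i)) < thr C CARD('d) r} \<in> sets (frogP r :: 'd frog_space measure)"
  using dep_decomp(1)[OF finite_Sset finite_Pset Ev_dep] psi1 by simp

lemma psi_pos: "psi_d C CARD('d) r > 0" using psi1 by simp

lemma step:
  "measure (frogP r :: 'd frog_space measure)
     ({w. real (card (Gamma C r \<xi> w (Suc i))) < thr C CARD('d) r} \<inter> - {w. real (card (Gamma C r \<xi> w i)) < thr C CARD('d) r})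
   \<le> beta C CARD('d) r"
proof -
  let ?M = "frogP r :: 'd frog_space measure"
  let ?T = "thr C CARD('d) r"
  let ?n = "nu_d C CARD('d) r"
  let ?AA = "{A. A \<subseteq> boxQ C r \<xi> i \<and> ?T \<le> real (card A)}"
  let ?G = "\<lambda>A. {w :: 'd frog_space. real (card (range_set w A ?n \<inter> boxQ C r \<xi> (Suc i) \<inter> occupied w)) < ?T}"
  let ?H = "\<lambda>A. {w :: 'd frog_space. Gamma C r \<xi> w i = A}"
  have finAA: "finite ?AA"
    by (rule finite_subset[of _ "Pow (boxQ C r \<xi> i)"]) (use finite_Q in auto)
  have eq: "{w. real (card (Gamma C r \<xi> w (Suc i))) < ?T} \<inter> - {w. real (card (Gamma C r \<xi> w i)) < ?T}
     = (\<Union>A\<in>?AA. ?H A \<inter> ?G A)"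
  proof (intro equalityI subsetI)
    fix w assume w: "w \<in> {w. real (card (Gamma C r \<xi> w (Suc i))) < ?T} \<inter> - {w. real (card (Gamma C r \<xi> w i)) < ?T}"
    show "w \<in> (\<Union>A\<in>?AA. ?H A \<inter> ?G A)"
    proof (rule UN_I[of "Gamma C r \<xi> w i"])
      show "Gamma C r \<xi> w i \<in> ?AA" using w Gamma_sub[of C r \<xi> w i] by auto
      show "w \<in> ?H (Gamma C r \<xi> w i) \<inter> ?G (Gamma C r \<xi> w i)" using w by (simp add: Int_assoc)
    qed
  next
    fix w assume "w \<in> (\<Union>A\<in>?AA. ?H A \<inter> ?G A)"
    then obtain A where A: "A \<in> ?AA" "Gamma C r \<xi> w i = A" "w \<in> ?G A" by blast
    then show "w \<in> {w. real (card (Gamma C r \<xi> w (Suc i))) < ?T} \<inter> - {w. real (card (Gamma C r \<xi> w i)) < ?T}"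
      by (simp add: Int_assoc)
  qed
  have depH: "dep (Sset C r \<xi> i) (Pset C r \<xi> i) (?H A)" for A
    using dep_Gamma[of C r \<xi> i "\<lambda>X. X = A"] by simp
  have depG: "dep (boxQ C r \<xi> (Suc i)) (A \<times> {..<?n}) (?G A)" for A
    using dep_range[of "boxQ C r \<xi> (Suc i)" A ?n "\<lambda>X. real (card X) < ?T"] by simp
  have finS: "finite (Sset C r \<xi> i)" "finite (Pset C r \<xi> i)"
    using finite_Sset[of C r \<xi> i] finite_Pset[of C r \<xi> i] psi1 by auto
  have setsH: "?H A \<in> sets ?M" for A by (rule dep_decomp(1)[OF finS depH])
  have setsG: "A \<in> ?AA \<Longrightarrow> ?G A \<in> sets ?M" for A
    by (rule dep_decomp(1)[OF finite_Q _ depG]) (auto intro: finite_subset[OF _ finite_Q])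
  have "measure ?M (\<Union>A\<in>?AA. ?H A \<inter> ?G A) \<le> (\<Sum>A\<in>?AA. measure ?M (?H A \<inter> ?G A))"
    by (rule measure_UNION_le[OF finAA]) (use setsH setsG in blast)
  also have "\<dots> = (\<Sum>A\<in>?AA. measure ?M (?H A) * measure ?M (?G A))"
  proof (rule sum.cong[OF refl])
    fix A assume A: "A \<in> ?AA"
    show "measure ?M (?H A \<inter> ?G A) = measure ?M (?H A) * measure ?M (?G A)"
    proof (rule dep_indep[OF finS finite_Q _ _ _ depH depG])
      show "finite (A \<times> {..<?n})" using A by (auto intro: finite_subset[OF _ finite_Q])
      show "Sset C r \<xi> i \<inter> boxQ C r \<xi> (Suc i) = {}" by (rule Sset_disj[OF xi psi_pos])
      show "Pset C r \<xi> i \<inter> A \<times> {..<?n} = {}" using A by (intro Pset_disj[OF xi psi_pos]) auto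
    qed
  qed
  also have "\<dots> \<le> (\<Sum>A\<in>?AA. measure ?M (?H A) * beta C CARD('d) r)"
  proof (rule sum_mono)
    fix A assume A: "A \<in> ?AA"
    show "measure ?M (?H A) * measure ?M (?G A) \<le> measure ?M (?H A) * beta C CARD('d) r"
      by (rule mult_left_mono) (use per_A[of A i "Suc i"] A in auto)
  qed
  also have "\<dots> = measure ?M (\<Union>A\<in>?AA. ?H A) * beta C CARD('d) r"
  proof -
    have "measure ?M (\<Union>A\<in>?AA. ?H A) = (\<Sum>A\<in>?AA. measure ?M (?H A))"
      by (rule measure_finite_Union[OF finAA])
        (use setsH finite_measure.emeasure_finite[OF frog_fin] in \<open>auto simp: disjoint_family_on_def\<close>)
    then show ?thesis by (simp add: sum_distrib_right)
  qed
  also have "\<dots> \<le> 1 * beta C CARD('d) r"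
    by (rule mult_right_mono) (auto simp: beta_def intro: prob_space.prob_le_1[OF frog_prob] add_nonneg_nonneg)
  finally show ?thesis using eq by simp
qed

lemma base:
  "measure (frogP r :: 'd frog_space measure) {w. real (card (Gamma C r \<xi> w 0)) < thr C CARD('d) r} \<le> beta C CARD('d) r"
proof -
  let ?M = "frogP r :: 'd frog_space measure"
  let ?T = "thr C CARD('d) r"
  let ?n = "nu_d C CARD('d) r"
  let ?G = "{w :: 'd frog_space. real (card (range_set w (boxQ C r \<xi> 0) ?n \<inter> boxQ C r \<xi> 0 \<inter> occupied w)) < ?T}"
  have sub: "{w. real (card (Gamma C r \<xi> w 0)) < ?T} \<subseteq> ?G"
  proof
    fix w assume w: "w \<in> {w. real (card (Gamma C r \<xi> w 0)) < ?T}"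
    have "card (range_set w (boxQ C r \<xi> 0) ?n \<inter> boxQ C r \<xi> 0 \<inter> occupied w) \<le> card (Gamma C r \<xi> w 0)"
      by (rule card_mono) (use finite_Q in auto)
    then show "w \<in> ?G" using w by simp
  qed
  have depG: "dep (boxQ C r \<xi> 0) (boxQ C r \<xi> 0 \<times> {..<?n}) ?G"
    using dep_range[of "boxQ C r \<xi> 0" "boxQ C r \<xi> 0" ?n "\<lambda>X. real (card X) < ?T"] by simp
  have setsG: "?G \<in> sets ?M"
    by (rule dep_decomp(1)[OF finite_Q _ depG]) (use finite_Q in auto)
  have "measure ?M {w. real (card (Gamma C r \<xi> w 0)) < ?T} \<le> measure ?M ?G"
    by (rule finite_measure.finite_measure_mono[OF frog_fin sub setsG])
  also have "\<dots> \<le> beta C CARD('d) r"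
    by (rule per_A[of "boxQ C r \<xi> 0" 0 0]) (use QT card_Q in auto)
  finally show ?thesis .
qed

lemma union_bound:
  "measure (frogP r :: 'd frog_space measure) (\<Union>i\<le>K. {w. real (card (Gamma C r \<xi> w i)) < thr C CARD('d) r})
    \<le> real (Suc K) * beta C CARD('d) r"
proof -
  let ?M = "frogP r :: 'd frog_space measure"
  let ?E = "\<lambda>i. {w :: 'd frog_space. real (card (Gamma C r \<xi> w i)) < thr C CARD('d) r}"
  let ?D = "\<lambda>i. ?E (Suc i) \<inter> - ?E i"
  have sub: "(\<Union>i\<le>K. ?E i) \<subseteq> ?E 0 \<union> (\<Union>i<K. ?D i)"
  proof -
    have "?E i \<subseteq> ?E 0 \<union> (\<Union>j<i. ?D j)" for i
    proof (induction i)
      case 0 then show ?case by simp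
    next
      case (Suc i)
      show ?case
      proof
        fix w assume w: "w \<in> ?E (Suc i)"
        show "w \<in> ?E 0 \<union> (\<Union>j<Suc i. ?D j)"
        proof (cases "w \<in> ?E i")
          case True then show ?thesis using Suc.IH by auto
        next
          case False then have "w \<in> ?D i" using w by simp
          then show ?thesis by blast
        qed
      qed
    qed
    then show ?thesis by fastforce
  qed
  have setsD: "?D i \<in> sets ?M" for i
  proof -
    have e: "?D i = ?E (Suc i) - ?E i" by blast
    show ?thesis by (subst e) (rule sets.Diff[OF Ev_sets Ev_sets])
  qed
  have "measure ?M (\<Union>i\<le>K. ?E i) \<le> measure ?M (?E 0 \<union> (\<Union>i<K. ?D i))"
    by (rule finite_measure.finite_measure_mono[OF frog_fin sub], intro sets.Un Ev_sets sets.finite_UN finite_lessThan setsD)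
  also have "\<dots> \<le> measure ?M (?E 0) + measure ?M (\<Union>i<K. ?D i)"
    by (rule measure_Un_le[OF Ev_sets], intro sets.finite_UN finite_lessThan setsD)
  also have "\<dots> \<le> beta C CARD('d) r + (\<Sum>i<K. measure ?M (?D i))"
    by (rule add_mono[OF base measure_UNION_le]) (use setsD in auto)
  also have "\<dots> \<le> beta C CARD('d) r + (\<Sum>i<K. beta C CARD('d) r)"
    by (rule add_left_mono, rule sum_mono, rule step)
  also have "\<dots> = real (Suc K) * beta C CARD('d) r" by (simp add: algebra_simps)
  finally show ?thesis .
qed

end

context
  fixes C r :: real and d :: nat
  assumes d2: "d \<ge> 2" and C: "0 < C" "C < 1" and r0: "0 < r" and re: "r \<le> exp (-1)" and rC: "r \<le> C / 1600"
begin

lemma r1: "r < 1"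
  using re by (smt (verit) exp_less_one_iff)

lemma lnr: "\<bar>ln r\<bar> = - ln r" "1 \<le> \<bar>ln r\<bar>"
proof -
  have "ln r \<le> ln (exp (-1))" using re r0 by (subst ln_le_cancel_iff) auto
  then have "ln r \<le> -1" by simp
  then show "\<bar>ln r\<bar> = - ln r" "1 \<le> \<bar>ln r\<bar>" by auto
qed

lemma lnr_inv: "\<bar>ln r\<bar> \<le> 1 / r"
proof -
  have "ln (1 / r) \<le> 1 / r - 1" using r0 by (intro ln_le_minus_one) simp
  then show ?thesis using lnr r0 by (simp add: ln_div)
qed

lemma lnr_sqrt: "\<bar>ln r\<bar> \<le> 2 / sqrt r"
proof -
  have "ln (1 / sqrt r) \<le> 1 / sqrt r - 1" using r0 by (intro ln_le_minus_one) simp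
  moreover have "ln (1 / sqrt r) = - ln r / 2" using r0 by (simp add: ln_div ln_sqrt)
  ultimately show ?thesis using lnr by simp
qed

lemma lnr_C: "ln (1600 / C) \<le> \<bar>ln r\<bar>"
proof -
  have "ln r \<le> ln (C / 1600)" using rC r0 by simp
  moreover have "ln (C / 1600) = - ln (1600 / C)" using C by (simp add: ln_div)
  ultimately show ?thesis using lnr by simp
qed

lemma psi_eq: "r * C * psi_d C d r = (if d = 2 then 4 * \<bar>ln r\<bar> else 2 * real d)"
proof (cases "d = 2")
  case True
  have "(sqrt (\<bar>ln r\<bar> / r))\<^sup>2 = \<bar>ln r\<bar> / r" using r0 by simp
  then show ?thesis using True C r0 by (simp add: psi_d_def delta_d_def)
next
  case False
  have "(1 / sqrt r)\<^sup>2 = 1 / r" using r0 by (simp add: power_divide)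
  then show ?thesis using False C r0 by (simp add: psi_d_def delta_d_def)
qed

lemma psi1: "psi_d C d r \<ge> 1"
proof -
  have "r * C * psi_d C d r \<ge> 1"
  proof (cases "d = 2")
    case True then show ?thesis using psi_eq lnr by simp
  next
    case False then show ?thesis using psi_eq d2 by simp
  qed
  moreover have "r * C \<le> 1" using r1 C r0 by (simp add: mult_le_one)
  moreover have "psi_d C d r \<ge> 0" unfolding psi_d_def using C by simp
  ultimately have "r * C * psi_d C d r \<le> 1 * psi_d C d r" by (intro mult_right_mono)
  then show ?thesis using \<open>r * C * psi_d C d r \<ge> 1\<close> by linarith
qed

lemma Qc_ge: "Qc C d r \<ge> (2 * sqrt (psi_d C d r)) ^ d"
proof -
  let ?L = "\<lceil>sqrt (psi_d C d r)\<rceil>"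
  have L: "real_of_int ?L \<ge> sqrt (psi_d C d r)" by simp
  have s0: "sqrt (psi_d C d r) \<ge> 0" using psi1 by simp
  have "Qc C d r = (2 * real_of_int ?L + 1) ^ d"
  proof -
    have "2 * ?L + 1 \<ge> 0" using L s0 by linarith
    then show ?thesis unfolding Qc_def by simp
  qed
  moreover have "(2 * sqrt (psi_d C d r)) ^ d \<le> (2 * real_of_int ?L + 1) ^ d"
    by (rule power_mono) (use L s0 in linarith)+
  ultimately show ?thesis by simp
qed

lemma Qc_ge4: "Qc C d r \<ge> 4 * psi_d C d r"
proof -
  have s1: "2 * sqrt (psi_d C d r) \<ge> 1" proof -
    have "sqrt (psi_d C d r) \<ge> 1" using psi1 by simp
    then show ?thesis by linarith
  qed
  have "(2 * sqrt (psi_d C d r)) ^ 2 \<le> (2 * sqrt (psi_d C d r)) ^ d"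
    by (rule power_increasing[OF d2 s1])
  moreover have "(2 * sqrt (psi_d C d r)) ^ 2 = 4 * psi_d C d r" using psi1 by (simp add: power_mult_distrib)
  ultimately show ?thesis using Qc_ge by simp
qed

lemma Qc_ge8: "d \<ge> 3 \<Longrightarrow> Qc C d r \<ge> 8 * psi_d C d r * sqrt (psi_d C d r)"
proof -
  assume d3: "d \<ge> 3"
  have s1: "2 * sqrt (psi_d C d r) \<ge> 1" proof -
    have "sqrt (psi_d C d r) \<ge> 1" using psi1 by simp
    then show ?thesis by linarith
  qed
  have "(2 * sqrt (psi_d C d r)) ^ 3 \<le> (2 * sqrt (psi_d C d r)) ^ d"
    by (rule power_increasing[OF d3 s1])
  moreover have "(2 * sqrt (psi_d C d r)) ^ 3 = 8 * psi_d C d r * sqrt (psi_d C d r)"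
    using psi1 by (simp add: power_mult_distrib power3_eq_cube)
  ultimately show ?thesis using Qc_ge by simp
qed

lemma nu_bounds: "real (nu_d C d r) \<ge> 100 * real d * psi_d C d r" "real (nu_d C d r) \<le> 200 * real d * psi_d C d r"
proof -
  have a: "real (nat \<lceil>psi_d C d r\<rceil>) = real_of_int \<lceil>psi_d C d r\<rceil>" using psi1 by simp
  have b: "psi_d C d r \<le> real_of_int \<lceil>psi_d C d r\<rceil>" "real_of_int \<lceil>psi_d C d r\<rceil> \<le> 2 * psi_d C d r"
    using psi1 by linarith+
  have n: "real (nu_d C d r) = 100 * real d * real_of_int \<lceil>psi_d C d r\<rceil>" unfolding nu_d_def using a by simp
  have "100 * real d * psi_d C d r \<le> 100 * real d * real_of_int \<lceil>psi_d C d r\<rceil>"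
    by (rule mult_left_mono[OF b(1)]) simp
  then show "real (nu_d C d r) \<ge> 100 * real d * psi_d C d r" using n by simp
  have "100 * real d * real_of_int \<lceil>psi_d C d r\<rceil> \<le> 100 * real d * (2 * psi_d C d r)"
    by (rule mult_left_mono[OF b(2)]) simp
  then show "real (nu_d C d r) \<le> 200 * real d * psi_d C d r" using n by simp
qed

lemma delta0_le: "delta0 d \<le> 1 / 100"
proof -
  have "(50 * real d) powr (- real d / 2) \<le> (50 * real d) powr (-1)"
    by (rule powr_mono) (use d2 in auto)
  also have "\<dots> = 1 / (50 * real d)" by (simp add: powr_minus_divide)
  also have "\<dots> \<le> 1 / 100" using d2 by (simp add: field_simps)
  finally show ?thesis unfolding delta0_def .
qed

lemma dens: "delta0 d * real (nu_d C d r) powr (real d / 2) \<le> Qc C d r"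
proof -
  let ?p = "psi_d C d r"
  have n: "real (nu_d C d r) = 100 * real d * real (nat \<lceil>?p\<rceil>)" unfolding nu_d_def by simp
  have c: "real (nat \<lceil>?p\<rceil>) \<le> 2 * ?p" using psi1 by linarith
  have e1: "(50 * real d) powr (- real d / 2) = 1 / (50 * real d) powr (real d / 2)"
  proof -
    have "- real d / 2 = - (real d / 2)" by simp
    then show ?thesis by (simp only: powr_minus_divide)
  qed
  have e2: "real (nu_d C d r) powr (real d / 2) / (50 * real d) powr (real d / 2) = (real (nu_d C d r) / (50 * real d)) powr (real d / 2)"
    by (rule powr_divide[symmetric])
  have e3: "real (nu_d C d r) / (50 * real d) = 2 * real (nat \<lceil>?p\<rceil>)"
    using d2 unfolding n by simp
  have "delta0 d * real (nu_d C d r) powr (real d / 2) = (2 * real (nat \<lceil>?p\<rceil>)) powr (real d / 2)"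
    unfolding delta0_def e1 e3[symmetric] e2[symmetric] by simp
  also have "\<dots> \<le> (4 * ?p) powr (real d / 2)"
    by (rule powr_mono2) (use c in auto)
  also have "\<dots> = (2 * sqrt ?p) ^ d"
  proof -
    have pos: "0 < 2 * sqrt ?p" using psi1 by simp
    have "(2 * sqrt ?p) powr 2 = (2 * sqrt ?p) ^ 2" by (rule powr_numeral) (use pos in linarith)
    also have "\<dots> = 4 * ?p" using psi1 by (simp add: power_mult_distrib)
    finally have a: "4 * ?p = (2 * sqrt ?p) powr 2" by simp
    have "(4 * ?p) powr (real d / 2) = (2 * sqrt ?p) powr (2 * (real d / 2))"
      unfolding a by (rule powr_powr)
    also have "\<dots> = (2 * sqrt ?p) powr (real d)" by simp
    also have "\<dots> = (2 * sqrt ?p) ^ d" by (rule powr_realpow[OF pos])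
    finally show ?thesis .
  qed
  also have "\<dots> \<le> Qc C d r" by (rule Qc_ge)
  finally show ?thesis .
qed


lemma rCpos: "0 < r * C" using r0 C by simp

lemma dpsi: "real d * psi_d C d r \<ge> 2"
proof -
  have "2 * 1 \<le> real d * psi_d C d r" by (rule mult_mono) (use d2 psi1 in auto)
  then show ?thesis by simp
qed

lemma nu_ge: "real (nu_d C d r) \<ge> 200"
  using nu_bounds(1) dpsi by linarith

lemma phi_bounds: "phi_d d (real (nu_d C d r)) \<ge> 0" "r * C * phi_d d (real (nu_d C d r)) \<ge> 3"
proof -
  let ?n = "real (nu_d C d r)" and ?p = "psi_d C d r"
  have n1: "?n \<ge> 100 * real d * ?p" by (rule nu_bounds(1))
  have rn: "r * C * ?n \<ge> 100 * real d * (r * C * ?p)"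
  proof -
    have "r * C * (100 * real d * ?p) \<le> r * C * ?n" by (rule mult_left_mono[OF n1]) (use rCpos in simp)
    then show ?thesis by (simp add: algebra_simps)
  qed
  have "phi_d d ?n \<ge> 0 \<and> r * C * phi_d d ?n \<ge> 3"
  proof (cases "d = 2")
    case False
    then have "r * C * ?n \<ge> 100 * real d * (2 * real d)" using rn psi_eq by simp
    moreover have "100 * real d * (2 * real d) \<ge> 3"
    proof -
      have "(2::real) * 2 \<le> real d * real d" by (rule mult_mono) (use d2 in auto)
      then show ?thesis by simp
    qed
    ultimately show ?thesis using False nu_ge unfolding phi_d_def by simp
  next
    case True
    have rn2: "r * C * ?n \<ge> 800 * \<bar>ln r\<bar>" using rn psi_eq True by simp
    have lnpos: "ln ?n > 0" using nu_ge by simp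
    have pe: "?p = 4 * \<bar>ln r\<bar> / (r * C)"
    proof -
      have ne: "r * C \<noteq> 0" using rCpos by linarith
      have "?p = (r * C * ?p) / (r * C)" by (simp only: nonzero_mult_div_cancel_left[OF ne])
      also have "r * C * ?p = 4 * \<bar>ln r\<bar>" using psi_eq True by simp
      finally show ?thesis .
    qed
    have "?n \<le> 400 * ?p" using nu_bounds(2) True by simp
    then have "ln ?n \<le> ln (400 * ?p)" using nu_ge by simp
    also have "400 * ?p = (1600 / C) * \<bar>ln r\<bar> * (1 / r)" unfolding pe using C r0 by (simp add: field_simps)
    also have "ln \<dots> = ln (1600 / C) + ln \<bar>ln r\<bar> + ln (1 / r)"
    proof -
      have pos: "1600 / C > 0" "\<bar>ln r\<bar> > 0" "1 / r > 0" using C r0 lnr(2) by auto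
      have m1: "ln ((1600 / C) * \<bar>ln r\<bar> * (1 / r)) = ln ((1600 / C) * \<bar>ln r\<bar>) + ln (1 / r)"
        by (rule ln_mult_pos) (use pos in \<open>simp_all add: mult_pos_pos\<close>)
      have m2: "ln ((1600 / C) * \<bar>ln r\<bar>) = ln (1600 / C) + ln \<bar>ln r\<bar>"
        by (rule ln_mult_pos) (use pos in simp_all)
      show ?thesis by (simp only: m1 m2)
    qed
    also have "\<dots> \<le> 3 * \<bar>ln r\<bar>"
    proof -
      have "ln \<bar>ln r\<bar> \<le> \<bar>ln r\<bar> - 1" using lnr by (intro ln_le_minus_one) simp
      moreover have "ln (1 / r) = \<bar>ln r\<bar>" using r0 lnr by (simp add: ln_div)
      ultimately show ?thesis using lnr_C by linarith
    qed
    finally have "3 * ln ?n \<le> 9 * \<bar>ln r\<bar>" by simp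
    then have "3 * ln ?n \<le> r * C * ?n" using rn2 lnr by linarith
    then have "3 \<le> r * C * ?n / ln ?n" using lnpos by (simp add: le_divide_eq)
    then show ?thesis using True lnpos nu_ge unfolding phi_d_def by simp
  qed
  then show "phi_d d ?n \<ge> 0" "r * C * phi_d d ?n \<ge> 3" by auto
qed

lemma thr_eq: "r * C * thr C d r = 2 * real d * r * \<bar>ln r\<bar>"
  unfolding thr_def using C by (simp add: field_simps)

lemma part_a: "r * (C * phi_d d (real (nu_d C d r)) * thr C d r) \<ge> 3 * thr C d r"
proof -
  have t0: "thr C d r \<ge> 0" unfolding thr_def using C by simp
  have "3 * thr C d r \<le> (r * C * phi_d d (real (nu_d C d r))) * thr C d r"
    by (rule mult_right_mono[OF phi_bounds(2) t0])
  then show ?thesis by (simp add: algebra_simps)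
qed

lemma thr_ge: "thr C d r \<ge> 2 * real d * \<bar>ln r\<bar>" "3 * thr C d r \<ge> 4 * (real d + 1) * \<bar>ln r\<bar>"
proof -
  have "2 * real d * \<bar>ln r\<bar> \<le> 2 * real d * \<bar>ln r\<bar> / C"
    using C by (simp add: le_divide_eq mult_le_cancel_left1 mult_left_le)
  then show t: "thr C d r \<ge> 2 * real d * \<bar>ln r\<bar>" unfolding thr_def by simp
  have "4 * (real d + 1) \<le> 6 * real d" using d2 by simp
  then have "4 * (real d + 1) * \<bar>ln r\<bar> \<le> 6 * real d * \<bar>ln r\<bar>" by (intro mult_right_mono) auto
  then show "3 * thr C d r \<ge> 4 * (real d + 1) * \<bar>ln r\<bar>" using t by linarith
qed

lemma part_b: "r * ((1 - delta0 d) * Qc C d r) \<ge> 2 * thr C d r \<and> r * ((1 - delta0 d) * Qc C d r) \<ge> 4 * (real d + 1) * \<bar>ln r\<bar>"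
proof -
  let ?p = "psi_d C d r"
  have Q0: "Qc C d r \<ge> 0" unfolding Qc_def by simp
  have b1: "r * ((1 - delta0 d) * Qc C d r) \<ge> 99 / 100 * (r * Qc C d r)"
  proof -
    have "99 / 100 * Qc C d r \<le> (1 - delta0 d) * Qc C d r"
      by (rule mult_right_mono[OF _ Q0]) (use delta0_le in simp)
    then have "r * (99 / 100 * Qc C d r) \<le> r * ((1 - delta0 d) * Qc C d r)" using r0 by (intro mult_left_mono) auto
    then show ?thesis by (metis mult.left_commute)
  qed
  have ic: "1 / C \<ge> 1" using C by simp
  show ?thesis
  proof (cases "d = 2")
    case True
    have "r * Qc C d r \<ge> r * (4 * ?p)" using Qc_ge4 r0 by (simp add: mult_left_mono)
    also have "r * (4 * ?p) = 16 * (\<bar>ln r\<bar> / C)"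
    proof -
      have "r * ?p = (r * C * ?p) / C" using C by simp
      also have "r * C * ?p = 4 * \<bar>ln r\<bar>" using psi_eq True by simp
      finally show ?thesis by simp
    qed
    finally have f1: "r * ((1 - delta0 d) * Qc C d r) \<ge> 99 / 100 * (16 * (\<bar>ln r\<bar> / C))" using b1 by linarith
    have f2: "2 * thr C d r = 8 * (\<bar>ln r\<bar> / C)" unfolding thr_def using True by simp
    have f3: "\<bar>ln r\<bar> / C \<ge> \<bar>ln r\<bar>"
    proof -
      have "\<bar>ln r\<bar> * 1 \<le> \<bar>ln r\<bar> * (1 / C)" by (rule mult_left_mono[OF ic]) simp
      then show ?thesis by simp
    qed
    have f4: "4 * (real d + 1) * \<bar>ln r\<bar> = 12 * \<bar>ln r\<bar>" using True by simp
    show ?thesis using f1 f2 f3 f4 lnr by linarith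
  next
    case False
    then have d3: "d \<ge> 3" using d2 by simp
    have pe: "r * ?p = 2 * real d / C" using psi_eq False C by (simp add: field_simps)
    have "?p \<ge> 1 / r"
    proof -
      have "2 * real d / C \<ge> 1" using d2 C by (simp add: le_divide_eq)
      then have "r * ?p \<ge> 1" using pe by simp
      then show ?thesis using r0 by (simp add: divide_le_eq mult.commute)
    qed
    then have "sqrt ?p \<ge> sqrt (1 / r)" by simp
    moreover have "sqrt (1 / r) = 1 / sqrt r" by (simp add: real_sqrt_divide)
    ultimately have sp: "sqrt ?p \<ge> \<bar>ln r\<bar> / 2" using lnr_sqrt by simp
    have "r * Qc C d r \<ge> r * (8 * ?p * sqrt ?p)" using Qc_ge8[OF d3] r0 by (simp add: mult_left_mono)
    also have "r * (8 * ?p * sqrt ?p) = 8 * (r * ?p) * sqrt ?p" by (simp only: mult_ac)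
    also have "\<dots> = 16 * real d / C * sqrt ?p" unfolding pe by simp
    also have "16 * real d / C * sqrt ?p \<ge> 16 * real d / C * (\<bar>ln r\<bar> / 2)"
      by (rule mult_left_mono[OF sp]) (use C in simp)
    finally have q: "r * Qc C d r \<ge> 8 * real d / C * \<bar>ln r\<bar>" by simp
    have "8 * real d / C * \<bar>ln r\<bar> \<ge> 8 * real d * \<bar>ln r\<bar>"
    proof -
      have "8 * real d * \<bar>ln r\<bar> * 1 \<le> 8 * real d * \<bar>ln r\<bar> * (1 / C)" by (rule mult_left_mono[OF ic]) simp
      then show ?thesis by simp
    qed
    moreover have "2 * thr C d r = 4 * real d / C * \<bar>ln r\<bar>" unfolding thr_def by simp
    moreover have "4 * (real d + 1) * \<bar>ln r\<bar> \<le> 7 * real d * \<bar>ln r\<bar>"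
      using d3 lnr by (intro mult_right_mono) auto
    moreover have "4 * real d / C * \<bar>ln r\<bar> \<le> 7 * real d / C * \<bar>ln r\<bar>"
    proof -
      have "4 * real d / C \<le> 7 * real d / C" by (rule divide_right_mono) (use C in auto)
      then show ?thesis by (rule mult_right_mono) simp
    qed
    moreover have "99 / 100 * (8 * real d / C * \<bar>ln r\<bar>) \<ge> 7 * real d / C * \<bar>ln r\<bar>"
    proof -
      have Z: "real d / C * \<bar>ln r\<bar> \<ge> 0" using C by simp
      have "8 * real d / C * \<bar>ln r\<bar> = 8 * (real d / C * \<bar>ln r\<bar>)" "7 * real d / C * \<bar>ln r\<bar> = 7 * (real d / C * \<bar>ln r\<bar>)"
        by simp_all
      then show ?thesis using Z by linarith
    qed
    moreover have "99 / 100 * (8 * real d * \<bar>ln r\<bar>) \<ge> 7 * real d * \<bar>ln r\<bar>"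
    proof -
      have Z: "real d * \<bar>ln r\<bar> \<ge> 0" by simp
      have "8 * real d * \<bar>ln r\<bar> = 8 * (real d * \<bar>ln r\<bar>)" "7 * real d * \<bar>ln r\<bar> = 7 * (real d * \<bar>ln r\<bar>)"
        by simp_all
      then show ?thesis using Z by linarith
    qed
    ultimately show ?thesis using b1 q by linarith
  qed
qed

lemma mf_bounds: "r * mf C d r (thr C d r) \<ge> 2 * thr C d r" "r * mf C d r (thr C d r) \<ge> 4 * (real d + 1) * \<bar>ln r\<bar>"
proof -
  have e: "r * mf C d r (thr C d r) = min (r * (C * phi_d d (real (nu_d C d r)) * thr C d r)) (r * ((1 - delta0 d) * Qc C d r))"
    unfolding mf_def using r0 by (simp add: min_mult_distrib_left)
  have t0: "thr C d r \<ge> 0" unfolding thr_def using C by simp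
  show "r * mf C d r (thr C d r) \<ge> 2 * thr C d r" unfolding e using part_a part_b t0 by simp
  show "r * mf C d r (thr C d r) \<ge> 4 * (real d + 1) * \<bar>ln r\<bar>" unfolding e using part_a part_b thr_ge by simp
qed

lemma good: "thr C d r \<le> r / 2 * mf C d r (thr C d r)"
  using mf_bounds(1) by simp

lemma QT: "thr C d r \<le> Qc C d r"
proof -
  have "r * C * thr C d r \<le> r * C * (4 * psi_d C d r)"
  proof (cases "d = 2")
    case True
    have "r * \<bar>ln r\<bar> \<le> 1 * \<bar>ln r\<bar>" using r1 by (intro mult_right_mono) auto
    have a: "r * C * thr C d r = 4 * (r * \<bar>ln r\<bar>)" using thr_eq True by simp
    have b: "r * C * (4 * psi_d C d r) = 4 * (r * C * psi_d C d r)" by simp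
    have c: "r * C * psi_d C d r = 4 * \<bar>ln r\<bar>" using psi_eq True by simp
    show ?thesis unfolding a b c using \<open>r * \<bar>ln r\<bar> \<le> 1 * \<bar>ln r\<bar>\<close> lnr by linarith
  next
    case False
    have "r * \<bar>ln r\<bar> \<le> 1" using lnr_inv r0 by (simp add: field_simps)
    then have "2 * real d * (r * \<bar>ln r\<bar>) \<le> 2 * real d * 4" by (intro mult_left_mono) auto
    have a: "r * C * thr C d r = 2 * real d * (r * \<bar>ln r\<bar>)" by (metis thr_eq mult.assoc)
    have b: "r * C * (4 * psi_d C d r) = 4 * (r * C * psi_d C d r)" by simp
    have c: "r * C * psi_d C d r = 2 * real d" using psi_eq False by simp
    show ?thesis unfolding a b c using \<open>2 * real d * (r * \<bar>ln r\<bar>) \<le> 2 * real d * 4\<close> by linarith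
  qed
  then have "thr C d r \<le> 4 * psi_d C d r" by (rule mult_left_le_imp_le[OF _ rCpos])
  then show ?thesis using Qc_ge4 by linarith
qed

lemma beta_le: "beta C d r \<le> 2 * r powr ((real d + 1) / 2)"
proof -
  have e1: "exp (- C * thr C d r) = r powr (2 * real d)"
    unfolding thr_def powr_def using C r0 lnr by simp
  have "r powr (2 * real d) \<le> r powr ((real d + 1) / 2)"
    by (rule powr_mono') (use r0 r1 d2 in auto)
  moreover have "exp (- (r / 8) * mf C d r (thr C d r)) \<le> r powr ((real d + 1) / 2)"
  proof -
    have h1: "r * mf C d r (thr C d r) \<ge> - 4 * ((real d + 1) * ln r)"
      using mf_bounds(2) lnr(1) by (simp add: algebra_simps)
    have h2: "- (r / 8) * mf C d r (thr C d r) = - (r * mf C d r (thr C d r)) / 8" by simp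
    have h3: "(real d + 1) / 2 * ln r = ((real d + 1) * ln r) / 2" by simp
    have "- (r / 8) * mf C d r (thr C d r) \<le> (real d + 1) / 2 * ln r"
      by (simp only: h2 h3) (use h1 in linarith)
    then show ?thesis unfolding powr_def using r0 by simp
  qed
  ultimately show ?thesis unfolding beta_def e1 by simp
qed

lemma final_bound:
  "real (Suc (nat \<lfloor>r powr (- real d / 2) * psi_d C d r powr (- 1 / 2)\<rfloor>)) * beta C d r \<le> 4 * sqrt r"
proof -
  let ?N = "r powr (- real d / 2) * psi_d C d r powr (- 1 / 2)"
  have p1: "psi_d C d r powr (- 1 / 2) \<le> 1"
    using psi1 by (simp add: powr_minus_divide ge_one_powr_ge_zero)
  have p0: "psi_d C d r powr (- 1 / 2) \<ge> 0" by simp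
  have R1: "r powr (- real d / 2) \<ge> 1"
  proof -
    have "r powr (real d / 2) \<le> 1" using r0 r1 by (intro powr_le1) auto
    moreover have "r powr (real d / 2) > 0" using r0 by simp
    moreover have "r powr (- real d / 2) = 1 / r powr (real d / 2)"
      by (metis minus_divide_left powr_minus_divide)
    ultimately show ?thesis by simp
  qed
  have N0: "?N \<ge> 0" by simp
  have NN: "?N \<le> r powr (- real d / 2)" using p1 p0 R1 by (simp add: mult_left_le)
  have "real (Suc (nat \<lfloor>?N\<rfloor>)) \<le> ?N + 1" using N0 by linarith
  also have "\<dots> \<le> 2 * r powr (- real d / 2)" using NN R1 by linarith
  finally have S: "real (Suc (nat \<lfloor>?N\<rfloor>)) \<le> 2 * r powr (- real d / 2)" .
  have b0: "beta C d r \<ge> 0" unfolding beta_def by (intro add_nonneg_nonneg) auto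
  have "real (Suc (nat \<lfloor>?N\<rfloor>)) * beta C d r \<le> (2 * r powr (- real d / 2)) * (2 * r powr ((real d + 1) / 2))"
    by (rule mult_mono[OF S beta_le]) (use b0 in auto)
  also have "\<dots> = 4 * (r powr (- real d / 2) * r powr ((real d + 1) / 2))" by simp
  also have "r powr (- real d / 2) * r powr ((real d + 1) / 2) = r powr (1 / 2)"
    by (simp add: powr_add[symmetric] field_simps)
  also have "r powr (1 / 2) = sqrt r" using r0 by (simp add: powr_half_sqrt)
  finally show ?thesis .
qed

end

lemma sigma_sub:
  fixes \<xi> :: "int^'d::finite"
  assumes "sigma C r \<xi> w = enat i" "real i \<le> N"
  shows "w \<in> (\<Union>j\<le>nat \<lfloor>N\<rfloor>. {w. real (card (Gamma C r \<xi> w j)) < thr C CARD('d) r})"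
proof -
  let ?P = "\<lambda>i. real (card (Gamma C r \<xi> w i)) < 2 * real CARD('d) / C * \<bar>ln r\<bar>"
  have ex: "\<exists>i. ?P i" and ieq: "i = (LEAST i. ?P i)"
    using assms(1) unfolding sigma_def Let_def by (auto split: if_splits)
  have "?P i" using LeastI_ex[OF ex] ieq by simp
  moreover have "i \<le> nat \<lfloor>N\<rfloor>" using assms(2) by (simp add: le_nat_floor)
  ultimately show ?thesis unfolding thr_def by auto
qed

theorem lemma3p9:
  fixes C :: real and \<xi> :: "int^'d::finite"
  assumes "CARD('d) \<ge> 2"
    and "frog_const TYPE('d) C"
    and "lone \<xi> = 1"
  shows "((\<lambda>r. measure (frogP r :: 'd frog_space measure)
            {w \<in> space (frogP r). \<exists>i::nat. sigma C r \<xi> w = enat i \<and>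
               real i \<le> r powr (- real CARD('d) / 2) * psi_d C CARD('d) r powr (- 1 / 2)})
          \<longlongrightarrow> 0) (at_right 0)"
proof -
  have C: "0 < C" "C < 1" using assms(2) by (auto simp: frog_const_def)
  let ?f = "\<lambda>r. measure (frogP r :: 'd frog_space measure)
            {w \<in> space (frogP r). \<exists>i::nat. sigma C r \<xi> w = enat i \<and>
               real i \<le> r powr (- real CARD('d) / 2) * psi_d C CARD('d) r powr (- 1 / 2)}"
  have ev: "eventually (\<lambda>r. 0 < r \<and> r \<le> exp (-1) \<and> r \<le> C / 1600) (at_right (0::real))"
  proof -
    have "min (exp (-1)) (C / 1600) > 0" using C by simp
    then show ?thesis unfolding eventually_at_right_field
      by (intro exI[of _ "min (exp (-1)) (C / 1600)"]) auto
  qed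
  have bound: "?f r \<le> 4 * sqrt r" if r: "0 < r" "r \<le> exp (-1)" "r \<le> C / 1600" for r
  proof -
    let ?N = "r powr (- real CARD('d) / 2) * psi_d C CARD('d) r powr (- 1 / 2)"
    let ?E = "\<lambda>j. {w :: 'd frog_space. real (card (Gamma C r \<xi> w j)) < thr C CARD('d) r}"
    note h = assms(1) C r
    have r1: "r \<le> 1" using r1[OF h] by simp
    have nu2: "2 \<le> nu_d C CARD('d) r" using nu_ge[OF h] by simp
    note hyps = assms(2) r(1) r1 assms(3) psi1[OF h] dens[OF h] good[OF h] QT[OF h] phi_bounds(1)[OF h] nu2
    have sub: "{w \<in> space (frogP r). \<exists>i::nat. sigma C r \<xi> w = enat i \<and> real i \<le> ?N} \<subseteq> (\<Union>j\<le>nat \<lfloor>?N\<rfloor>. ?E j)"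
      using sigma_sub by blast
    have "?f r \<le> measure (frogP r :: 'd frog_space measure) (\<Union>j\<le>nat \<lfloor>?N\<rfloor>. ?E j)"
      by (rule finite_measure.finite_measure_mono[OF frog_fin sub], intro sets.finite_UN finite_atMost Ev_sets[OF hyps])
    also have "\<dots> \<le> real (Suc (nat \<lfloor>?N\<rfloor>)) * beta C CARD('d) r"
      by (rule union_bound[OF hyps])
    also have "\<dots> \<le> 4 * sqrt r" by (rule final_bound[OF h])
    finally show ?thesis .
  qed
  show ?thesis
  proof (rule tendsto_sandwich[of "\<lambda>_. 0" _ _ "\<lambda>r. 4 * sqrt r"])
    show "eventually (\<lambda>r. 0 \<le> ?f r) (at_right 0)" by simp
    show "eventually (\<lambda>r. ?f r \<le> 4 * sqrt r) (at_right 0)"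
      using ev by eventually_elim (use bound in auto)
    show "((\<lambda>_. 0) \<longlongrightarrow> (0::real)) (at_right 0)" by simp
    have "((\<lambda>r. 4 * sqrt r) \<longlongrightarrow> 4 * sqrt 0) (at_right (0::real))" by (intro tendsto_intros)
    then show "((\<lambda>r. 4 * sqrt r) \<longlongrightarrow> 0) (at_right (0::real))" by simp
  qed
qed

end
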